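(* Let $L$ be an $R_0$-algebra and $k\in[0,1)$. Every $(\in,\in\vee q_k)$-fuzzy fated filter $\mu$ of $L$ satisfies, for all $x,y,z\in L$: (1) $\mu(x\to z)\ge\min\{\mu(x\to(y\to z)),\mu(x\to y),\tfrac{1-k}{2}\}$; (2) $\mu(x)\ge\min\{\mu((x\to y)\to x),\tfrac{1-k}{2}\}$.
   Context: An $R_0$-algebra is a bounded distributive lattice $(L,\wedge,\vee,0,1)$ with an order-reversing involution $\neg$ and a binary operation $\to$ such that for all $x,y,z\in L$: $x\to y=\neg y\to\neg x$; $1\to x=x$; $(y\to z)\wedge((x\to y)\to(x\to z))=y\to z$; $x\to(y\to z)=y\to(x\to z)$; $x\to(y\vee z)=(x\to y)\vee(x\to z)$; $(x\to y)\vee((x\to y)\to(\neg x\vee y))=1$. For $x\in L$, $t\in(0,1]$ and a fuzzy subset $\mu:L\to[0,1]$: $x_t\in\mu$ iff $\mu(x)\ge t$; $x_t\,q_k\,\mu$ iff $\mu(x)+t+k>1$; $x_t\in\vee q_k\,\mu$ iff $x_t\in\mu$ or $x_t\,q_k\,\mu$. $\mu$ is an $(\in,\in\vee q_k)$-fuzzy fated filter of $L$ if (i) for all $x\in L$, $t\in(0,1]$: $x_t\in\mu\Rightarrow 1_t\in\vee q_k\,\mu$; and (ii) for all $x,a,y\in L$, $t,s\in(0,1]$: if $(a\to((x\to y)\to x))_t\in\mu$ and $a_s\in\mu$ then $x_{\min\{t,s\}}\in\vee q_k\,\mu$. *)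

theory Defs
  imports Complex_Main
begin

text \<open>An R0-algebra on a carrier set L with meet, join, 0, 1, negation and implication.
  The lattice order is x \<le> y iff x \<and> y = x.\<close>

definition bdl :: "'a set \<Rightarrow> ('a \<Rightarrow> 'a \<Rightarrow> 'a) \<Rightarrow> ('a \<Rightarrow> 'a \<Rightarrow> 'a) \<Rightarrow> 'a \<Rightarrow> 'a \<Rightarrow> bool" where
  "bdl L mt jn zero one \<longleftrightarrow>
     zero \<in> L \<and> one \<in> L \<and>
     (\<forall>x\<in>L. \<forall>y\<in>L. mt x y \<in> L \<and> jn x y \<in> L) \<and>
     (\<forall>x\<in>L. \<forall>y\<in>L. mt x y = mt y x \<and> jn x y = jn y x) \<and>
     (\<forall>x\<in>L. \<forall>y\<in>L. \<forall>w\<in>L. mt (mt x y) w = mt x (mt y w) \<and> jn (jn x y) w = jn x (jn y w)) \<and>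
     (\<forall>x\<in>L. \<forall>y\<in>L. mt x (jn x y) = x \<and> jn x (mt x y) = x) \<and>
     (\<forall>x\<in>L. \<forall>y\<in>L. \<forall>w\<in>L. mt x (jn y w) = jn (mt x y) (mt x w)) \<and>
     (\<forall>x\<in>L. jn x zero = x \<and> mt x one = x)"

definition R0_algebra ::
  "'a set \<Rightarrow> ('a \<Rightarrow> 'a \<Rightarrow> 'a) \<Rightarrow> ('a \<Rightarrow> 'a \<Rightarrow> 'a) \<Rightarrow> 'a \<Rightarrow> 'a \<Rightarrow> ('a \<Rightarrow> 'a) \<Rightarrow> ('a \<Rightarrow> 'a \<Rightarrow> 'a) \<Rightarrow> bool" where
  "R0_algebra L mt jn zero one ng imp \<longleftrightarrow>
     bdl L mt jn zero one \<and>
     (\<forall>x\<in>L. ng x \<in> L \<and> ng (ng x) = x) \<and>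
     (\<forall>x\<in>L. \<forall>y\<in>L. mt x y = x \<longrightarrow> mt (ng y) (ng x) = ng y) \<and>
     (\<forall>x\<in>L. \<forall>y\<in>L. imp x y \<in> L) \<and>
     (\<forall>x\<in>L. \<forall>y\<in>L. imp x y = imp (ng y) (ng x)) \<and>
     (\<forall>x\<in>L. imp one x = x) \<and>
     (\<forall>x\<in>L. \<forall>y\<in>L. \<forall>w\<in>L. mt (imp y w) (imp (imp x y) (imp x w)) = imp y w) \<and>
     (\<forall>x\<in>L. \<forall>y\<in>L. \<forall>w\<in>L. imp x (imp y w) = imp y (imp x w)) \<and>
     (\<forall>x\<in>L. \<forall>y\<in>L. \<forall>w\<in>L. imp x (jn y w) = jn (imp x y) (imp x w)) \<and>
     (\<forall>x\<in>L. \<forall>y\<in>L. jn (imp x y) (imp (imp x y) (jn (ng x) y)) = one)"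

definition fbelongs :: "('a \<Rightarrow> real) \<Rightarrow> 'a \<Rightarrow> real \<Rightarrow> bool" where
  "fbelongs \<mu> x t \<longleftrightarrow> \<mu> x \<ge> t"

definition fquasi :: "real \<Rightarrow> ('a \<Rightarrow> real) \<Rightarrow> 'a \<Rightarrow> real \<Rightarrow> bool" where
  "fquasi k \<mu> x t \<longleftrightarrow> \<mu> x + t + k > 1"

definition fbelongs_or_quasi :: "real \<Rightarrow> ('a \<Rightarrow> real) \<Rightarrow> 'a \<Rightarrow> real \<Rightarrow> bool" where
  "fbelongs_or_quasi k \<mu> x t \<longleftrightarrow> fbelongs \<mu> x t \<or> fquasi k \<mu> x t"

definition fuzzy_subset :: "'a set \<Rightarrow> ('a \<Rightarrow> real) \<Rightarrow> bool" where
  "fuzzy_subset L \<mu> \<longleftrightarrow> (\<forall>x\<in>L. 0 \<le> \<mu> x \<and> \<mu> x \<le> 1)"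

definition in_inq_fuzzy_fated_filter ::
  "real \<Rightarrow> 'a set \<Rightarrow> 'a \<Rightarrow> ('a \<Rightarrow> 'a \<Rightarrow> 'a) \<Rightarrow> ('a \<Rightarrow> real) \<Rightarrow> bool" where
  "in_inq_fuzzy_fated_filter k L one imp \<mu> \<longleftrightarrow>
     fuzzy_subset L \<mu> \<and>
     (\<forall>x\<in>L. \<forall>t. 0 < t \<and> t \<le> 1 \<longrightarrow> fbelongs \<mu> x t \<longrightarrow> fbelongs_or_quasi k \<mu> one t) \<and>
     (\<forall>x\<in>L. \<forall>a\<in>L. \<forall>y\<in>L. \<forall>t s. 0 < t \<and> t \<le> 1 \<and> 0 < s \<and> s \<le> 1 \<longrightarrow>
        fbelongs \<mu> (imp a (imp (imp x y) x)) t \<longrightarrow> fbelongs \<mu> a s \<longrightarrow>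
        fbelongs_or_quasi k \<mu> x (min t s))"

end

theory Submission
  imports Defs
begin

lemma r0f0:
  assumes "R0_algebra L mt jn zero one ng imp"
  shows "zero \<in> L"
  using assms unfolding R0_algebra_def bdl_def apply (elim conjE) by meson

lemma r0f1:
  assumes "R0_algebra L mt jn zero one ng imp"
  shows "one \<in> L"
  using assms unfolding R0_algebra_def bdl_def apply (elim conjE) by meson

lemma r0f2:
  assumes "R0_algebra L mt jn zero one ng imp"
  shows "\<And>x y. x\<in>L \<Longrightarrow> y\<in>L \<Longrightarrow> mt x y \<in> L"
  using assms unfolding R0_algebra_def bdl_def apply (elim conjE) by meson

lemma r0f3:
  assumes "R0_algebra L mt jn zero one ng imp"
  shows "\<And>x y. x\<in>L \<Longrightarrow> y\<in>L \<Longrightarrow> jn x y \<in> L"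
  using assms unfolding R0_algebra_def bdl_def apply (elim conjE) by meson

lemma r0f4:
  assumes "R0_algebra L mt jn zero one ng imp"
  shows "\<And>x y. x\<in>L \<Longrightarrow> y\<in>L \<Longrightarrow> mt x y = mt y x"
  using assms unfolding R0_algebra_def bdl_def apply (elim conjE) by meson

lemma r0f5:
  assumes "R0_algebra L mt jn zero one ng imp"
  shows "\<And>x y. x\<in>L \<Longrightarrow> y\<in>L \<Longrightarrow> jn x y = jn y x"
  using assms unfolding R0_algebra_def bdl_def apply (elim conjE) by meson

lemma r0f6:
  assumes "R0_algebra L mt jn zero one ng imp"
  shows "\<And>x y. x\<in>L \<Longrightarrow> y\<in>L \<Longrightarrow> mt x (jn x y) = x"
  using assms unfolding R0_algebra_def bdl_def apply (elim conjE) by meson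

lemma r0f7:
  assumes "R0_algebra L mt jn zero one ng imp"
  shows "\<And>x y. x\<in>L \<Longrightarrow> y\<in>L \<Longrightarrow> jn x (mt x y) = x"
  using assms unfolding R0_algebra_def bdl_def apply (elim conjE) by meson

lemma r0f8:
  assumes "R0_algebra L mt jn zero one ng imp"
  shows "\<And>x. x\<in>L \<Longrightarrow> jn x zero = x"
  using assms unfolding R0_algebra_def bdl_def apply (elim conjE) by meson

lemma r0f9:
  assumes "R0_algebra L mt jn zero one ng imp"
  shows "\<And>x. x\<in>L \<Longrightarrow> mt x one = x"
  using assms unfolding R0_algebra_def bdl_def apply (elim conjE) by meson

lemma r0f10:
  assumes "R0_algebra L mt jn zero one ng imp"
  shows "\<And>x. x\<in>L \<Longrightarrow> ng x \<in> L"
  using assms unfolding R0_algebra_def bdl_def apply (elim conjE) by meson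

lemma r0f11:
  assumes "R0_algebra L mt jn zero one ng imp"
  shows "\<And>x. x\<in>L \<Longrightarrow> ng (ng x) = x"
  using assms unfolding R0_algebra_def bdl_def apply (elim conjE) by meson

lemma r0f12:
  assumes "R0_algebra L mt jn zero one ng imp"
  shows "\<And>x y. x\<in>L \<Longrightarrow> y\<in>L \<Longrightarrow> mt x y = x \<Longrightarrow> mt (ng y) (ng x) = ng y"
  using assms unfolding R0_algebra_def bdl_def apply (elim conjE) by meson

lemma r0f13:
  assumes "R0_algebra L mt jn zero one ng imp"
  shows "\<And>x y. x\<in>L \<Longrightarrow> y\<in>L \<Longrightarrow> imp x y \<in> L"
  using assms unfolding R0_algebra_def bdl_def apply (elim conjE) by meson

lemma r0f14:
  assumes "R0_algebra L mt jn zero one ng imp"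
  shows "\<And>x y. x\<in>L \<Longrightarrow> y\<in>L \<Longrightarrow> imp x y = imp (ng y) (ng x)"
  using assms unfolding R0_algebra_def bdl_def apply (elim conjE) by meson

lemma r0f15:
  assumes "R0_algebra L mt jn zero one ng imp"
  shows "\<And>x. x\<in>L \<Longrightarrow> imp one x = x"
  using assms unfolding R0_algebra_def bdl_def apply (elim conjE) by meson

lemma r0f16:
  assumes "R0_algebra L mt jn zero one ng imp"
  shows "\<And>x y w. x\<in>L \<Longrightarrow> y\<in>L \<Longrightarrow> w\<in>L \<Longrightarrow> mt (imp y w) (imp (imp x y) (imp x w)) = imp y w"
  using assms unfolding R0_algebra_def bdl_def apply (elim conjE) by meson

lemma r0f17:
  assumes "R0_algebra L mt jn zero one ng imp"
  shows "\<And>x y w. x\<in>L \<Longrightarrow> y\<in>L \<Longrightarrow> w\<in>L \<Longrightarrow> imp x (imp y w) = imp y (imp x w)"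
  using assms unfolding R0_algebra_def bdl_def apply (elim conjE) by meson

lemma r0f18:
  assumes "R0_algebra L mt jn zero one ng imp"
  shows "\<And>x y w. x\<in>L \<Longrightarrow> y\<in>L \<Longrightarrow> w\<in>L \<Longrightarrow> imp x (jn y w) = jn (imp x y) (imp x w)"
  using assms unfolding R0_algebra_def bdl_def apply (elim conjE) by meson

lemmas r0_facts = r0f0 r0f1 r0f2 r0f3 r0f4 r0f5 r0f6 r0f7 r0f8 r0f9 r0f10 r0f11 r0f12 r0f13 r0f14 r0f15 r0f16 r0f17 r0f18


lemma r0_top:
  assumes R: "R0_algebra L mt jn zero one ng imp" and W: "W \<in> L" and h: "mt one W = one"
  shows "W = one"
proof -
  have "mt one W = mt W one" using r0_facts(5)[OF R r0_facts(2)[OF R] W] .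
  thus ?thesis using r0_facts(10)[OF R W] h by simp
qed

lemma r0_ngzero:
  assumes R: "R0_algebra L mt jn zero one ng imp"
  shows "ng zero = one"
proof -
  note f = r0_facts[OF R]
  have n1: "ng one \<in> L" using f(11)[OF f(2)] .
  have e1: "jn zero (ng one) = ng one" using f(6)[OF f(1) n1] f(9)[OF n1] by (rule trans)
  have e2: "mt zero (ng one) = zero" using f(7)[OF f(1) n1] unfolding e1 .
  have e3: "mt (ng (ng one)) (ng zero) = ng (ng one)" using f(13)[OF f(1) n1 e2] .
  have e4: "mt one (ng zero) = one" using e3 unfolding f(12)[OF f(2)] .
  show ?thesis using r0_top[OF R f(11)[OF f(1)] e4] .
qed

lemma r0_self:
  assumes R: "R0_algebra L mt jn zero one ng imp" and b: "b \<in> L"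
  shows "imp b b = one"
proof -
  note f = r0_facts[OF R]
  have nz: "ng zero = one" by (rule r0_ngzero[OF R])
  have zz: "imp zero zero = one" using f(15)[OF f(1) f(1)] nz f(16)[OF f(2)] by simp
  have nb: "ng b \<in> L" using f(11)[OF b] .
  have xz: "imp (ng b) zero = ng (ng b)" using f(15)[OF nb f(1)] nz f(16)[OF f(11)[OF nb]] by simp
  have "mt (imp zero zero) (imp (imp (ng b) zero) (imp (ng b) zero)) = imp zero zero"
    using f(17)[OF nb f(1) f(1)] .
  hence "mt one (imp b b) = one" using zz xz f(12)[OF b] by simp
  thus ?thesis using r0_top[OF R f(14)[OF b b]] by simp
qed

lemma r0_le_imp:
  assumes R: "R0_algebra L mt jn zero one ng imp" and a: "a\<in>L" and b: "b\<in>L" and h: "mt a b = a"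
  shows "imp a b = one"
proof -
  note f = r0_facts[OF R]
  have "jn b a = b" using f(8)[OF b a] f(5)[OF a b] h by simp
  hence "jn a b = b" using f(6)[OF a b] by simp
  hence "imp a b = jn (imp a a) (imp a b)" using f(19)[OF a a b] by simp
  also have "\<dots> = jn one (imp a b)" using r0_self[OF R a] by simp
  also have "\<dots> = one"
  proof -
    have ab: "imp a b \<in> L" using f(14)[OF a b] .
    have "mt one (imp a b) = imp a b" using f(5)[OF f(2) ab] f(10)[OF ab] by simp
    thus ?thesis using f(8)[OF f(2) ab] by simp
  qed
  finally show ?thesis .
qed

lemma r0_mono:
  assumes R: "R0_algebra L mt jn zero one ng imp" and b: "b\<in>L" and c: "c\<in>L" and x: "x\<in>L"
    and h: "imp b c = one"
  shows "imp (imp x b) (imp x c) = one"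
proof -
  note f = r0_facts[OF R]
  have "mt one (imp (imp x b) (imp x c)) = one" using f(17)[OF x b c] h by simp
  thus ?thesis using r0_top[OF R f(14)[OF f(14)[OF x b] f(14)[OF x c]]] by simp
qed

theorem proposition3p16:
  fixes L :: "'a set" and mt jn imp :: "'a \<Rightarrow> 'a \<Rightarrow> 'a" and zero one :: 'a
    and ng :: "'a \<Rightarrow> 'a" and \<mu> :: "'a \<Rightarrow> real" and k :: real
  assumes "R0_algebra L mt jn zero one ng imp"
    and "0 \<le> k" and "k < 1"
    and "in_inq_fuzzy_fated_filter k L one imp \<mu>"
  shows "(\<forall>x\<in>L. \<forall>y\<in>L. \<forall>w\<in>L.
           \<mu> (imp x w) \<ge> min (min (\<mu> (imp x (imp y w))) (\<mu> (imp x y))) ((1 - k) / 2)) \<and>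
         (\<forall>x\<in>L. \<forall>y\<in>L. \<mu> x \<ge> min (\<mu> (imp (imp x y) x)) ((1 - k) / 2))"
proof -
  note R = assms(1)
  note f = r0_facts[OF R]
  have fs: "\<And>x. x\<in>L \<Longrightarrow> 0 \<le> \<mu> x"
    using assms(4) unfolding in_inq_fuzzy_fated_filter_def fuzzy_subset_def by blast
  have F1: "\<And>x t. x\<in>L \<Longrightarrow> 0 < t \<Longrightarrow> t \<le> 1 \<Longrightarrow> \<mu> x \<ge> t \<Longrightarrow> \<mu> one \<ge> t \<or> \<mu> one + t + k > 1"
    using assms(4) unfolding in_inq_fuzzy_fated_filter_def fbelongs_or_quasi_def fbelongs_def fquasi_def
    by blast
  have F2: "\<And>x a y t. x\<in>L \<Longrightarrow> a\<in>L \<Longrightarrow> y\<in>L \<Longrightarrow> 0 < t \<Longrightarrow> t \<le> 1 \<Longrightarrow>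
      \<mu> (imp a (imp (imp x y) x)) \<ge> t \<Longrightarrow> \<mu> a \<ge> t \<Longrightarrow> \<mu> x \<ge> t \<or> \<mu> x + t + k > 1"
  proof -
    fix x a y t assume "x\<in>L" "a\<in>L" "y\<in>L" "0 < t" "t \<le> 1"
      "\<mu> (imp a (imp (imp x y) x)) \<ge> t" "\<mu> a \<ge> t"
    thus "\<mu> x \<ge> t \<or> \<mu> x + t + k > 1"
      using assms(4) unfolding in_inq_fuzzy_fated_filter_def fbelongs_or_quasi_def fbelongs_def fquasi_def
      by (metis min.idem)
  qed
  define T where "T = {t::real. 0 < t \<and> t \<le> (1-k)/2}"
  have one: "\<And>x t. x\<in>L \<Longrightarrow> t\<in>T \<Longrightarrow> \<mu> x \<ge> t \<Longrightarrow> \<mu> one \<ge> t"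
  proof -
    fix x t assume "x\<in>L" "t\<in>T" "\<mu> x \<ge> t"
    thus "\<mu> one \<ge> t" using F1[of x t] assms(2,3) unfolding T_def by force
  qed
  have FC: "\<And>x a y t. x\<in>L \<Longrightarrow> a\<in>L \<Longrightarrow> y\<in>L \<Longrightarrow> t\<in>T \<Longrightarrow>
      \<mu> (imp a (imp (imp x y) x)) \<ge> t \<Longrightarrow> \<mu> a \<ge> t \<Longrightarrow> \<mu> x \<ge> t"
  proof -
    fix x a y t assume "x\<in>L" "a\<in>L" "y\<in>L" "t\<in>T"
      "\<mu> (imp a (imp (imp x y) x)) \<ge> t" "\<mu> a \<ge> t"
    thus "\<mu> x \<ge> t" using F2[of x a y t] assms(2,3) unfolding T_def by force
  qed
  have MP: "\<And>a b t. a\<in>L \<Longrightarrow> b\<in>L \<Longrightarrow> t\<in>T \<Longrightarrow> \<mu> (imp a b) \<ge> t \<Longrightarrow> \<mu> a \<ge> t \<Longrightarrow> \<mu> b \<ge> t"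
  proof -
    fix a b t assume h: "a\<in>L" "b\<in>L" "t\<in>T" "\<mu> (imp a b) \<ge> t" "\<mu> a \<ge> t"
    have "imp (imp b b) b = b" using r0_self[OF R h(2)] f(16)[OF h(2)] by simp
    thus "\<mu> b \<ge> t" using FC[of b a b t] h by simp
  qed
  have MO: "\<And>a b t. a\<in>L \<Longrightarrow> b\<in>L \<Longrightarrow> t\<in>T \<Longrightarrow> imp a b = one \<Longrightarrow> \<mu> a \<ge> t \<Longrightarrow> \<mu> b \<ge> t"
  proof -
    fix a b t assume h: "a\<in>L" "b\<in>L" "t\<in>T" "imp a b = one" "\<mu> a \<ge> t"
    have "\<mu> one \<ge> t" using one h by blast
    thus "\<mu> b \<ge> t" using MP[of a b t] h by simp
  qed
  have P2: "\<forall>x\<in>L. \<forall>y\<in>L. \<mu> x \<ge> min (\<mu> (imp (imp x y) x)) ((1 - k) / 2)"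
  proof (intro ballI)
    fix x y assume x: "x\<in>L" and y: "y\<in>L"
    define t where "t = min (\<mu> (imp (imp x y) x)) ((1 - k) / 2)"
    show "\<mu> x \<ge> t"
    proof (cases "t \<le> 0")
      case True thus ?thesis using fs[OF x] by linarith
    next
      case False
      hence tT: "t\<in>T" unfolding T_def t_def by (auto simp: min_def)
      have e: "imp (imp x y) x \<in> L" using f(14)[OF f(14)[OF x y] x] .
      have m: "\<mu> (imp (imp x y) x) \<ge> t" unfolding t_def by simp
      hence "\<mu> one \<ge> t" using one e tT by blast
      thus ?thesis using FC[of x one y t] f(2) f(16)[OF e] x y tT m by simp
    qed
  qed
  have P1: "\<forall>x\<in>L. \<forall>y\<in>L. \<forall>w\<in>L.
           \<mu> (imp x w) \<ge> min (min (\<mu> (imp x (imp y w))) (\<mu> (imp x y))) ((1 - k) / 2)"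
  proof (intro ballI)
    fix x y w assume x: "x\<in>L" and y: "y\<in>L" and w: "w\<in>L"
    define t where "t = min (min (\<mu> (imp x (imp y w))) (\<mu> (imp x y))) ((1 - k) / 2)"
    show "\<mu> (imp x w) \<ge> t"
    proof (cases "t \<le> 0")
      case True thus ?thesis using fs[OF f(14)[OF x w]] by linarith
    next
      case False
      hence tT: "t\<in>T" unfolding T_def t_def by (auto simp: min_def)
      have xw: "imp x w \<in> L" using f(14)[OF x w] .
      have xy: "imp x y \<in> L" using f(14)[OF x y] .
      have xxw: "imp x (imp x w) \<in> L" using f(14)[OF x xw] .
      have A: "\<mu> (imp y (imp x w)) \<ge> t" using f(18)[OF x y w] unfolding t_def by simp
      have yxw: "imp y (imp x w) \<in> L" using f(14)[OF y xw] .
      have B: "imp (imp x y) (imp x (imp x w)) \<in> L" using f(14)[OF xy xxw] .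
      have "mt (imp y (imp x w)) (imp (imp x y) (imp x (imp x w))) = imp y (imp x w)"
        using f(17)[OF x y xw] .
      hence "imp (imp y (imp x w)) (imp (imp x y) (imp x (imp x w))) = one"
        using r0_le_imp[OF R yxw B] by simp
      hence "\<mu> (imp (imp x y) (imp x (imp x w))) \<ge> t" using MO yxw B tT A by blast
      moreover have "\<mu> (imp x y) \<ge> t" unfolding t_def by simp
      ultimately have C: "\<mu> (imp x (imp x w)) \<ge> t" using MP xy xxw tT by blast
      define c where "c = imp (imp (imp x w) w) w"
      have xww: "imp (imp x w) w \<in> L" using f(14)[OF xw w] .
      have c: "c \<in> L" unfolding c_def using f(14)[OF xww w] .
      have "imp (imp x w) c = imp (imp (imp x w) w) (imp (imp x w) w)"
        unfolding c_def using f(18)[OF xw xww w] .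
      hence "imp (imp x w) c = one" using r0_self[OF R xww] by simp
      hence "imp (imp x (imp x w)) (imp x c) = one" using r0_mono[OF R xw c x] by simp
      moreover have "imp x c = imp (imp (imp x w) w) (imp x w)"
        unfolding c_def using f(18)[OF x xww w] .
      ultimately have "imp (imp x (imp x w)) (imp (imp (imp x w) w) (imp x w)) = one" by simp
      moreover have D: "imp (imp (imp x w) w) (imp x w) \<in> L" using f(14)[OF xww xw] .
      ultimately have "\<mu> (imp (imp (imp x w) w) (imp x w)) \<ge> t" using MO xxw tT C by blast
      moreover have "\<mu> one \<ge> t" using one C xxw tT by blast
      ultimately have "\<mu> (imp one (imp (imp (imp x w) w) (imp x w))) \<ge> t" "\<mu> one \<ge> t"
        using f(16)[OF D] by simp_all
      thus ?thesis using FC[OF xw f(2) w tT] by blast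
    qed
  qed
  show ?thesis using P1 P2 by (rule conjI)
qed

end
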